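(* Let $N \ge 1$ be an integer and $p \in [0,1]$. Let $(K_1, K_2, K_3)$ be a multinomially distributed random vector with $N$ trials and cell probabilities $(1-p)^2$, $2(1-p)p$, $p^2$, i.e. \[ \Pr[K_1=k_1,K_2=k_2,K_3=k_3]=\binom{N}{k_1,k_2,k_3}(1-p)^{2k_1}\bigl(2(1-p)p\bigr)^{k_2}p^{2k_3} \] for nonnegative integers with $k_1+k_2+k_3=N$. Define \[ g(k_1,k_2)=\begin{cases}1 & \text{if } k_1=0 \text{ and } k_2=0,\\ 0 & \text{if } k_1>0 \text{ and } k_2=0,\\ \dfrac{k_2}{2k_1+k_2} & \text{otherwise.}\end{cases} \] Then \[ E[g(K_1,K_2)]=\frac{2N\,(p-p^{2N})}{2N-1}+p^{2N}. \]
   Context: This models $N$ RFID tags read in two independent reader sessions, where each tag is independently unread in each session with probability $p$; $K_1$ is the number of tags read in both sessions, $K_2$ the number read in exactly one session, $K_3$ the number read in neither. The quantity $g(K_1,K_2)$ is the estimator $\hat p$ of $p$. *)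

theory Defs
  imports Complex_Main
begin

definition multinom3 :: "nat \<Rightarrow> nat \<Rightarrow> nat \<Rightarrow> real" where
  "multinom3 k1 k2 k3 = fact (k1 + k2 + k3) / (fact k1 * fact k2 * fact k3)"

definition pmf3 :: "real \<Rightarrow> nat \<Rightarrow> nat \<Rightarrow> nat \<Rightarrow> real" where
  "pmf3 p k1 k2 k3 = multinom3 k1 k2 k3 * (1 - p) ^ (2 * k1)
      * (2 * (1 - p) * p) ^ k2 * p ^ (2 * k3)"

definition g :: "nat \<Rightarrow> nat \<Rightarrow> real" where
  "g k1 k2 = (if k1 = 0 \<and> k2 = 0 then 1
              else if k1 > 0 \<and> k2 = 0 then 0
              else real k2 / (2 * real k1 + real k2))"

definition supp3 :: "nat \<Rightarrow> (nat \<times> nat \<times> nat) set" where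
  "supp3 N = {(k1, k2, k3). k1 + k2 + k3 = N}"

definition expect_g :: "nat \<Rightarrow> real \<Rightarrow> real" where
  "expect_g N p = (\<Sum>(k1, k2, k3) \<in> supp3 N. g k1 k2 * pmf3 p k1 k2 k3)"

end

theory Submission imports Defs "HOL-Analysis.Analysis" begin

lemma finite_supp3: "finite (supp3 N)"
proof -
  have "supp3 N \<subseteq> {..N} \<times> {..N} \<times> {..N}" unfolding supp3_def by auto
  thus ?thesis by (rule finite_subset) auto
qed

lemma supp3_eq: "supp3 N = (\<lambda>(i,j). (i,j,N-i-j)) ` (SIGMA i:{..N}. {..N-i})"
  unfolding supp3_def by (auto simp: image_iff)

lemma multinom3_binom:
  assumes "i \<le> N" "j \<le> N - i"
  shows "multinom3 i j (N-i-j) = real (N choose i) * real ((N-i) choose j)"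
proof -
  have e: "i + j + (N-i-j) = N" using assms by auto
  have "real (N choose i) * real ((N-i) choose j) = fact N / (fact i * fact (N-i)) * (fact (N-i) / (fact j * fact (N-i-j)))"
    using assms by (simp add: binomial_fact)
  also have "\<dots> = fact N / (fact i * fact j * fact (N-i-j))"
    by (simp add: field_simps)
  finally show ?thesis unfolding multinom3_def e by simp
qed

lemma trinom:
  fixes a b c :: real
  shows "(\<Sum>(k1,k2,k3)\<in>supp3 N. multinom3 k1 k2 k3 * a^k1 * b^k2 * c^k3) = (a+b+c)^N"
proof -
  have inj: "inj_on (\<lambda>(i,j). (i,j,N-i-j)) (SIGMA i:{..N}. {..N-i})"
    by (auto simp: inj_on_def)
  have "(\<Sum>(k1,k2,k3)\<in>supp3 N. multinom3 k1 k2 k3 * a^k1 * b^k2 * c^k3)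
     = (\<Sum>(i,j)\<in>(SIGMA i:{..N}. {..N-i}). multinom3 i j (N-i-j) * a^i * b^j * c^(N-i-j))"
    unfolding supp3_eq by (subst sum.reindex[OF inj]) (simp add: case_prod_unfold)
  also have "\<dots> = (\<Sum>i\<le>N. \<Sum>j\<le>N-i. multinom3 i j (N-i-j) * a^i * b^j * c^(N-i-j))"
    by (subst sum.Sigma[symmetric]) auto
  also have "\<dots> = (\<Sum>i\<le>N. \<Sum>j\<le>N-i. real (N choose i) * a^i * (real ((N-i) choose j) * b^j * c^(N-i-j)))"
    by (intro sum.cong refl, subst multinom3_binom) (auto simp: mult_ac)
  also have "\<dots> = (\<Sum>i\<le>N. real (N choose i) * a^i * (\<Sum>j\<le>N-i. real ((N-i) choose j) * b^j * c^(N-i-j)))"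
    by (simp add: sum_distrib_left)
  also have "\<dots> = (\<Sum>i\<le>N. real (N choose i) * a^i * (b+c)^(N-i))"
    by (simp add: binomial_ring)
  also have "\<dots> = (a+(b+c))^N" by (simp add: binomial_ring)
  finally show ?thesis by (simp add: add.assoc)
qed

lemma multinom3_Suc:
  "real (Suc k2) * multinom3 k1 (Suc k2) k3 = real (Suc (k1+k2+k3)) * multinom3 k1 k2 k3"
  unfolding multinom3_def
  by (simp add: field_simps fact_Suc del: of_nat_Suc)

lemma trinom_d:
  fixes a b c :: real
  shows "(\<Sum>(k1,k2,k3)\<in>supp3 (Suc M). real k2 * multinom3 k1 k2 k3 * a^k1 * b^(k2-1) * c^k3) = real (Suc M) * (a+b+c)^M"
proof -
  let ?h = "\<lambda>(k1,k2,k3). (k1, Suc k2, k3)"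
  have inj: "inj_on ?h (supp3 M)" by (auto simp: inj_on_def)
  have sub: "?h ` supp3 M \<subseteq> supp3 (Suc M)" by (auto simp: supp3_def)
  have "(\<Sum>(k1,k2,k3)\<in>supp3 (Suc M). real k2 * multinom3 k1 k2 k3 * a^k1 * b^(k2-1) * c^k3)
      = (\<Sum>(k1,k2,k3)\<in>?h ` supp3 M. real k2 * multinom3 k1 k2 k3 * a^k1 * b^(k2-1) * c^k3)"
  proof (rule sum.mono_neutral_right[OF finite_supp3 sub], safe)
    fix k1 k2 k3 assume "(k1,k2,k3) \<in> supp3 (Suc M)" "(k1,k2,k3) \<notin> ?h ` supp3 M"
    hence "k2 = 0" unfolding supp3_def by (cases k2) (auto simp: image_iff)
    thus "real k2 * multinom3 k1 k2 k3 * a^k1 * b^(k2-1) * c^k3 = 0" by simp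
  qed
  also have "\<dots> = (\<Sum>(k1,k2,k3)\<in>supp3 M. real (Suc k2) * multinom3 k1 (Suc k2) k3 * a^k1 * b^k2 * c^k3)"
    by (subst sum.reindex[OF inj]) (simp add: case_prod_unfold)
  also have "\<dots> = (\<Sum>(k1,k2,k3)\<in>supp3 M. real (Suc M) * (multinom3 k1 k2 k3 * a^k1 * b^k2 * c^k3))"
  proof (rule sum.cong[OF refl])
    fix x assume "x \<in> supp3 M"
    then obtain k1 k2 k3 where x: "x = (k1,k2,k3)" and M: "M = k1+k2+k3"
      by (cases x) (auto simp: supp3_def)
    show "(case x of (k1,k2,k3) \<Rightarrow> real (Suc k2) * multinom3 k1 (Suc k2) k3 * a^k1 * b^k2 * c^k3)
      = (case x of (k1,k2,k3) \<Rightarrow> real (Suc M) * (multinom3 k1 k2 k3 * a^k1 * b^k2 * c^k3))"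
      unfolding x using multinom3_Suc[of k2 k1 k3] M by (simp only: prod.case)
  qed
  also have "\<dots> = real (Suc M) * (a+b+c)^M"
    using trinom[where N=M and a=a and b=b and c=c] by (simp add: sum_distrib_left[symmetric] case_prod_unfold)
  finally show ?thesis .
qed

lemma g_split: "g k1 k2 = (if k1 = 0 \<and> k2 = 0 then 1 else 0) + real k2 / (2 * real k1 + real k2)"
  unfolding g_def by auto

lemma pow_integral: "((\<lambda>t::real. t ^ n) has_integral (1 / real (Suc n))) {0..1}"
proof -
  have "((\<lambda>t::real. t ^ n) has_integral ((\<lambda>t. t ^ Suc n / real (Suc n)) 1 - (\<lambda>t. t ^ Suc n / real (Suc n)) 0)) {0..1}"
  proof (rule fundamental_theorem_of_calculus)
    fix x :: real assume "x \<in> {0..1}"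
    show "((\<lambda>t. t ^ Suc n / real (Suc n)) has_vector_derivative x ^ n) (at x within {0..1})"
      unfolding has_real_derivative_iff_has_vector_derivative[symmetric]
      by (rule derivative_eq_intros refl | simp)+
  qed simp
  thus ?thesis by simp
qed

lemma G_integral:
  fixes p q :: real and M :: nat
  shows "((\<lambda>t. 2 * real (Suc M) * p * q * (q * t + p) ^ (2 * M)) has_integral
     (2 * real (Suc M) * p / (2 * real (Suc M) - 1) * ((q + p) ^ (2*M+1) - p ^ (2*M+1)))) {0..1}"
proof -
  define F where "F = (\<lambda>t. 2 * real (Suc M) * p / (2 * real (Suc M) - 1) * (q * t + p) ^ (2*M+1))"
  have "((\<lambda>t. 2 * real (Suc M) * p * q * (q * t + p) ^ (2 * M)) has_integral (F 1 - F 0)) {0..1}"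
  proof (rule fundamental_theorem_of_calculus)
    fix x :: real assume "x \<in> {0..1}"
    have "(F has_real_derivative 2 * real (Suc M) * p / (2 * real (Suc M) - 1) * (real (2*M+1) * (q * x + p) ^ (2*M) * q)) (at x within {0..1})"
      unfolding F_def
      by (rule derivative_eq_intros refl | simp)+
    moreover have "2 * real (Suc M) * p / (2 * real (Suc M) - 1) * (real (2*M+1) * (q * x + p) ^ (2*M) * q)
       = 2 * real (Suc M) * p * q * (q * x + p) ^ (2 * M)"
      by (simp add: field_simps)
    ultimately show "(F has_vector_derivative 2 * real (Suc M) * p * q * (q * x + p) ^ (2 * M)) (at x within {0..1})"
      unfolding has_real_derivative_iff_has_vector_derivative[symmetric] by (simp add: mult_ac)
  qed simp
  thus ?thesis unfolding F_def by (simp add: right_diff_distrib)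
qed

theorem lemma1:
  fixes N :: nat and p :: real
  assumes "N \<ge> 1" and "0 \<le> p" and "p \<le> 1"
  shows "expect_g N p = 2 * real N * (p - p ^ (2 * N)) / (2 * real N - 1) + p ^ (2 * N)"
proof -
  obtain M where NM: "N = Suc M" using assms(1) by (cases N) auto
  define q where "q = 1 - p"
  define S where "S = (\<Sum>(k1,k2,k3)\<in>supp3 N. real k2 / (2 * real k1 + real k2) * pmf3 p k1 k2 k3)"
  have part1: "(\<Sum>(k1,k2,k3)\<in>supp3 N. (if k1 = 0 \<and> k2 = 0 then 1 else 0) * pmf3 p k1 k2 k3) = p ^ (2*N)"
  proof -
    have "(\<Sum>(k1,k2,k3)\<in>supp3 N. (if k1 = 0 \<and> k2 = 0 then 1 else 0) * pmf3 p k1 k2 k3)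
       = (\<Sum>x\<in>supp3 N. if x = (0,0,N) then pmf3 p 0 0 N else 0)"
      by (rule sum.cong) (auto simp: supp3_def split: if_split_asm)
    also have "\<dots> = pmf3 p 0 0 N"
      by (subst sum.delta[OF finite_supp3]) (simp add: supp3_def)
    also have "\<dots> = p ^ (2*N)" by (simp add: pmf3_def multinom3_def)
    finally show ?thesis .
  qed
  have E: "expect_g N p = p ^ (2*N) + S"
    unfolding expect_g_def S_def g_split part1[symmetric]
    by (simp add: sum.distrib[symmetric] case_prod_unfold distrib_right)
  define f where "f = (\<lambda>x t. case x of (k1,k2,k3) \<Rightarrow> real k2 * multinom3 k1 k2 k3 * (q*q)^k1 * (2*q*p)^k2 * p^(2*k3) * t^(2*k1+k2-1))"
  have int1: "(f x has_integral (case x of (k1,k2,k3) \<Rightarrow> real k2 / (2 * real k1 + real k2) * pmf3 p k1 k2 k3)) {0..1}" for x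
  proof -
    obtain k1 k2 k3 where x: "x = (k1,k2,k3)" by (cases x) auto
    have "((\<lambda>t. (real k2 * multinom3 k1 k2 k3 * (q*q)^k1 * (2*q*p)^k2 * p^(2*k3)) * t^(2*k1+k2-1)) has_integral
        (real k2 * multinom3 k1 k2 k3 * (q*q)^k1 * (2*q*p)^k2 * p^(2*k3)) * (1 / real (Suc (2*k1+k2-1)))) {0..1}"
      by (rule has_integral_mult_right[OF pow_integral])
    moreover have "(real k2 * multinom3 k1 k2 k3 * (q*q)^k1 * (2*q*p)^k2 * p^(2*k3)) * (1 / real (Suc (2*k1+k2-1)))
        = real k2 / (2 * real k1 + real k2) * pmf3 p k1 k2 k3"
    proof (cases k2)
      case 0 thus ?thesis by simp
    next
      case (Suc j)
      hence "real (Suc (2*k1+k2-1)) = 2 * real k1 + real k2" by simp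
      thus ?thesis unfolding pmf3_def q_def[symmetric] by (simp add: power_mult power2_eq_square field_simps)
    qed
    ultimately show ?thesis unfolding f_def x by simp
  qed
  have int2: "((\<lambda>t. \<Sum>x\<in>supp3 N. f x t) has_integral S) {0..1}"
    unfolding S_def case_prod_unfold
    using has_integral_sum[OF finite_supp3, where f=f and i="\<lambda>x. case x of (k1,k2,k3) \<Rightarrow> real k2 / (2 * real k1 + real k2) * pmf3 p k1 k2 k3"] int1
    by (simp add: case_prod_unfold)
  have pw: "(\<Sum>x\<in>supp3 N. f x t) = 2 * real (Suc M) * p * q * (q * t + p) ^ (2 * M)" for t
  proof -
    have "(\<Sum>x\<in>supp3 N. f x t) = (\<Sum>(k1,k2,k3)\<in>supp3 (Suc M). 2*q*p * (real k2 * multinom3 k1 k2 k3 * (q*q*t*t)^k1 * (2*q*p*t)^(k2-1) * (p*p)^k3))"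
      unfolding NM
    proof (rule sum.cong[OF refl])
      fix x assume "x \<in> supp3 (Suc M)"
      obtain k1 k2 k3 where x: "x = (k1,k2,k3)" by (cases x) auto
      show "f x t = (case x of (k1,k2,k3) \<Rightarrow> 2*q*p * (real k2 * multinom3 k1 k2 k3 * (q*q*t*t)^k1 * (2*q*p*t)^(k2-1) * (p*p)^k3))"
      proof (cases k2)
        case 0 thus ?thesis unfolding f_def x by simp
      next
        case (Suc j)
        have "2*k1+k2-1 = 2*k1+j" using Suc by simp
        thus ?thesis unfolding f_def x using Suc
          by (simp add: power_mult power_mult_distrib power2_eq_square power_add mult_ac)
      qed
    qed
    also have "\<dots> = 2*q*p * (real (Suc M) * (q*q*t*t + 2*q*p*t + p*p)^M)"
      using trinom_d[where M=M and a="q*q*t*t" and b="2*q*p*t" and c="p*p"]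
      by (simp add: sum_distrib_left[symmetric] case_prod_unfold)
    also have "(q*q*t*t + 2*q*p*t + p*p) = (q*t+p)^2" by (simp add: power2_eq_square algebra_simps)
    finally show ?thesis by (simp add: power_mult[symmetric] mult.commute[of 2 M] algebra_simps)
  qed
  have "S = 2 * real (Suc M) * p / (2 * real (Suc M) - 1) * ((q + p) ^ (2*M+1) - p ^ (2*M+1))"
    using has_integral_unique[OF int2[unfolded pw] G_integral] .
  also have "\<dots> = 2 * real N * (p - p ^ (2 * N)) / (2 * real N - 1)"
    unfolding q_def NM by (simp add: right_diff_distrib diff_divide_distrib mult_ac)
  finally show ?thesis unfolding E by simp
qed

end
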